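(* Let $d\in\mathbb{N}$, $n\geq 3$, and let $k$ be a nonnegative integer with $k\leq \frac{n}{4d+6}-d-5$. Let $G$ and $H$ be graphs on $n$ vertices, each with average degree at most $d$. Suppose there are distinct vertices $u_1,\dots,u_{n-k}$ of $G$ and distinct vertices $w_1,\dots,w_{n-k}$ of $H$ such that $G-u_i\cong H-w_i$ for every $i\in[n-k]$. Then $|E(G)|=|E(H)|$. (That is, the number of edges of a graph with average degree at most $d$ can be reconstructed from any deck missing at most $\frac{n}{4d+6}-d-5$ cards.)
   Context: All graphs are finite, simple and undirected. For a graph $G$ and $v\in V(G)$, the card $G-v$ is the graph obtained by deleting $v$ and all edges incident to it; the deck of $G$ is the multiset of unlabelled cards $G-v$, $v\in V(G)$. The average degree of an $n$-vertex graph with $m$ edges is $2m/n$. *)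

theory Defs
  imports Complex_Main
begin

definition simple_graph :: "'a set \<Rightarrow> 'a set set \<Rightarrow> bool" where
  "simple_graph V E \<longleftrightarrow> finite V \<and> (\<forall>e\<in>E. e \<subseteq> V \<and> card e = 2)"

definition del_vertex_edges :: "'a set set \<Rightarrow> 'a \<Rightarrow> 'a set set" where
  "del_vertex_edges E v = {e \<in> E. v \<notin> e}"

definition graph_iso :: "'a set \<Rightarrow> 'a set set \<Rightarrow> 'b set \<Rightarrow> 'b set set \<Rightarrow> bool" where
  "graph_iso V1 E1 V2 E2 \<longleftrightarrow>
     (\<exists>f. bij_betw f V1 V2 \<and> (\<forall>x\<in>V1. \<forall>y\<in>V1. {x, y} \<in> E1 \<longleftrightarrow> {f x, f y} \<in> E2))"

definition avg_degree :: "'a set \<Rightarrow> 'a set set \<Rightarrow> real" where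
  "avg_degree V E = 2 * real (card E) / real (card V)"

end

theory Submission
  imports Defs
begin


definition nb :: "'a set \<Rightarrow> 'a set set \<Rightarrow> 'a \<Rightarrow> 'a set" where
  "nb V E v = {y\<in>V. {v,y}\<in>E}"
definition dg :: "'a set \<Rightarrow> 'a set set \<Rightarrow> 'a \<Rightarrow> nat" where
  "dg V E v = card (nb V E v)"
definition Psi :: "nat \<Rightarrow> 'a set \<Rightarrow> 'a set set \<Rightarrow> nat" where
  "Psi T V E = (\<Sum>v\<in>V. min (dg V E v) T)"
definition lam :: "nat \<Rightarrow> 'a set \<Rightarrow> 'a set set \<Rightarrow> 'a \<Rightarrow> nat" where
  "lam T V E u = card {v\<in>nb V E u. dg V E v \<le> T}"

lemma nb_sub: "nb V E v \<subseteq> V" by (auto simp: nb_def)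

lemma sg_finite: "simple_graph V E \<Longrightarrow> finite V" by (simp add: simple_graph_def)

lemma sg_finiteE: "simple_graph V E \<Longrightarrow> finite E"
proof -
  assume s: "simple_graph V E"
  then have "E \<subseteq> Pow V" by (auto simp: simple_graph_def)
  moreover have "finite (Pow V)" using s by (simp add: simple_graph_def)
  ultimately show ?thesis by (rule finite_subset)
qed

lemma nb_finite: "simple_graph V E \<Longrightarrow> finite (nb V E v)"
  using nb_sub sg_finite finite_subset by metis

lemma nb_irr: "simple_graph V E \<Longrightarrow> v \<notin> nb V E v"
  by (auto simp: nb_def simple_graph_def)

lemma nb_sym: "u \<in> nb V E v \<longleftrightarrow> v \<in> nb V E u" if "u \<in> V" "v \<in> V"
  using that by (auto simp: nb_def insert_commute)

lemma inc_card:
  assumes s: "simple_graph V E" and v: "v \<in> V"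
  shows "card {e\<in>E. v\<in>e} = dg V E v"
proof -
  have "bij_betw (\<lambda>y. {v,y}) (nb V E v) {e\<in>E. v\<in>e}"
  proof (rule bij_betwI')
    fix x y assume "x \<in> nb V E v" "y \<in> nb V E v"
    show "({v, x} = {v, y}) = (x = y)" by (auto simp: doubleton_eq_iff)
  next
    fix x assume "x \<in> nb V E v" then show "{v,x} \<in> {e\<in>E. v\<in>e}" by (auto simp: nb_def)
  next
    fix e assume "e \<in> {e\<in>E. v\<in>e}"
    then have e: "e \<in> E" "v \<in> e" by auto
    then have "e \<subseteq> V" "card e = 2" using s by (auto simp: simple_graph_def)
    then obtain a b where ab: "e = {a,b}" "a \<noteq> b" by (auto simp: card_2_iff)
    then obtain y where "e = {v,y}" using e by (auto simp: insert_commute)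
    moreover have "y \<in> V" using \<open>e \<subseteq> V\<close> calculation by auto
    ultimately show "\<exists>y\<in>nb V E v. e = {v,y}" using e by (auto simp: nb_def)
  qed
  then show ?thesis by (simp add: dg_def bij_betw_same_card)
qed

lemma handshake:
  assumes s: "simple_graph V E"
  shows "(\<Sum>v\<in>V. dg V E v) = 2 * card E"
proof -
  have fV: "finite V" and fE: "finite E" using s sg_finite sg_finiteE by auto
  have "(\<Sum>v\<in>V. dg V E v) = (\<Sum>v\<in>V. card {e\<in>E. v\<in>e})"
    using inc_card[OF s] by simp
  also have "\<dots> = (\<Sum>v\<in>V. \<Sum>e\<in>E. if v \<in> e then 1 else 0)"
    using fE by (simp add: sum.inter_filter[symmetric])
  also have "\<dots> = (\<Sum>e\<in>E. \<Sum>v\<in>V. if v \<in> e then 1 else 0)"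
    by (rule sum.swap)
  also have "\<dots> = (\<Sum>e\<in>E. 2)"
  proof (rule sum.cong)
    fix e assume "e \<in> E"
    then have "e \<subseteq> V" "card e = 2" using s by (auto simp: simple_graph_def)
    then have "{v\<in>V. v \<in> e} = e" by auto
    then show "(\<Sum>v\<in>V. if v \<in> e then 1 else 0) = (2::nat)"
      using fV \<open>card e = 2\<close> by (simp add: sum.inter_filter[symmetric])
  qed simp
  finally show ?thesis by simp
qed

lemma card_del:
  assumes s: "simple_graph V E" and u: "u \<in> V"
  shows "card (del_vertex_edges E u) + dg V E u = card E"
proof -
  have fE: "finite E" using s sg_finiteE by auto
  have "E = del_vertex_edges E u \<union> {e\<in>E. u\<in>e}" by (auto simp: del_vertex_edges_def)
  moreover have "del_vertex_edges E u \<inter> {e\<in>E. u\<in>e} = {}" by (auto simp: del_vertex_edges_def)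
  ultimately have "card E = card (del_vertex_edges E u) + card {e\<in>E. u\<in>e}"
    using fE by (metis (no_types, lifting) card_Un_disjoint finite_Un)
  then show ?thesis using inc_card[OF s u] by simp
qed

lemma sg_del: "simple_graph V E \<Longrightarrow> simple_graph (V - {u}) (del_vertex_edges E u)"
  by (auto simp: simple_graph_def del_vertex_edges_def)

lemma nb_del: "v \<noteq> u \<Longrightarrow> nb (V - {u}) (del_vertex_edges E u) v = nb V E v - {u}"
  by (auto simp: nb_def del_vertex_edges_def)

lemma Psi_del:
  assumes s: "simple_graph V E" and u: "u \<in> V"
  shows "Psi T V E = Psi T (V - {u}) (del_vertex_edges E u) + min (dg V E u) T + lam T V E u"
proof -
  have fV: "finite V" using s sg_finite by auto
  let ?V = "V - {u}" and ?E = "del_vertex_edges E u"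
  have pt: "min (dg V E v) T = min (dg ?V ?E v) T + (if v \<in> nb V E u \<and> dg V E v \<le> T then 1 else 0)"
    if v: "v \<in> ?V" for v
  proof -
    have vV: "v \<in> V" "v \<noteq> u" using v by auto
    have d': "dg ?V ?E v = dg V E v - (if u \<in> nb V E v then 1 else 0)"
      using nb_del[OF vV(2)] nb_finite[OF s] by (simp add: dg_def card_Diff_singleton_if)
    show ?thesis
    proof (cases "v \<in> nb V E u")
      case True
      then have "u \<in> nb V E v" using nb_sym u vV by metis
      then have "dg V E v \<ge> 1" using nb_finite[OF s] unfolding dg_def
        by (metis One_nat_def Suc_leI card_gt_0_iff empty_iff)
      then show ?thesis using d' \<open>u \<in> nb V E v\<close> True by auto
    next
      case False
      then have "u \<notin> nb V E v" using nb_sym u vV by metis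
      then show ?thesis using d' False by auto
    qed
  qed
  have "Psi T V E = min (dg V E u) T + (\<Sum>v\<in>?V. min (dg V E v) T)"
    unfolding Psi_def using fV u by (simp add: sum.remove)
  also have "(\<Sum>v\<in>?V. min (dg V E v) T) = (\<Sum>v\<in>?V. min (dg ?V ?E v) T)
     + (\<Sum>v\<in>?V. if v \<in> nb V E u \<and> dg V E v \<le> T then 1 else 0)"
    using pt by (simp add: sum.distrib)
  also have "(\<Sum>v\<in>?V. if v \<in> nb V E u \<and> dg V E v \<le> T then 1 else 0) = card {v\<in>?V. v \<in> nb V E u \<and> dg V E v \<le> T}"
    using fV by (simp add: sum.inter_filter[symmetric])
  also have "{v\<in>?V. v \<in> nb V E u \<and> dg V E v \<le> T} = {v\<in>nb V E u. dg V E v \<le> T}"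
    using nb_irr[OF s, of u] nb_sub[of V E u] by auto
  finally show ?thesis unfolding Psi_def lam_def by simp
qed

lemma lam_sum:
  assumes s: "simple_graph V E"
  shows "(\<Sum>v\<in>V. lam T V E v) = (\<Sum>y\<in>V. if dg V E y \<le> T then dg V E y else 0)"
proof -
  have fV: "finite V" using s sg_finite by auto
  have "(\<Sum>v\<in>V. lam T V E v) = (\<Sum>v\<in>V. \<Sum>y\<in>V. if {v,y} \<in> E \<and> dg V E y \<le> T then 1 else 0)"
  proof (rule sum.cong)
    fix v assume "v \<in> V"
    have "{v'\<in>nb V E v. dg V E v' \<le> T} = {y\<in>V. {v,y} \<in> E \<and> dg V E y \<le> T}" by (auto simp: nb_def)
    then show "lam T V E v = (\<Sum>y\<in>V. if {v,y} \<in> E \<and> dg V E y \<le> T then 1 else 0)"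
      unfolding lam_def using fV by (simp add: sum.inter_filter[symmetric])
  qed simp
  also have "\<dots> = (\<Sum>y\<in>V. \<Sum>v\<in>V. if {v,y} \<in> E \<and> dg V E y \<le> T then 1 else 0)"
    by (rule sum.swap)
  also have "\<dots> = (\<Sum>y\<in>V. if dg V E y \<le> T then dg V E y else 0)"
  proof (rule sum.cong)
    fix y assume "y \<in> V"
    have "{v\<in>V. {v,y} \<in> E} = nb V E y" by (auto simp: nb_def insert_commute)
    then have "(\<Sum>v\<in>V. if {v,y} \<in> E then 1 else 0) = dg V E y"
      unfolding dg_def using fV by (simp add: sum.inter_filter[symmetric])
    then show "(\<Sum>v\<in>V. if {v,y} \<in> E \<and> dg V E y \<le> T then 1 else 0) = (if dg V E y \<le> T then dg V E y else 0)"
      by (cases "dg V E y \<le> T") auto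
  qed simp
  finally show ?thesis .
qed

lemma iso_inv:
  assumes s1: "simple_graph V1 E1" and s2: "simple_graph V2 E2"
    and iso: "graph_iso V1 E1 V2 E2"
  shows "card E1 = card E2 \<and> Psi T V1 E1 = Psi T V2 E2"
proof -
  obtain f where bij: "bij_betw f V1 V2" and ed: "\<forall>x\<in>V1. \<forall>y\<in>V1. {x, y} \<in> E1 \<longleftrightarrow> {f x, f y} \<in> E2"
    using iso unfolding graph_iso_def by blast
  have img: "f ` V1 = V2" and inj: "inj_on f V1" using bij by (auto simp: bij_betw_def)
  have nbf: "nb V2 E2 (f v) = f ` nb V1 E1 v" if v: "v \<in> V1" for v
  proof
    show "f ` nb V1 E1 v \<subseteq> nb V2 E2 (f v)" using ed v img by (auto simp: nb_def)
  next
    show "nb V2 E2 (f v) \<subseteq> f ` nb V1 E1 v"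
    proof
      fix y' assume "y' \<in> nb V2 E2 (f v)"
      then have "y' \<in> V2" "{f v, y'} \<in> E2" by (auto simp: nb_def)
      then obtain y where "y \<in> V1" "y' = f y" using img by auto
      then show "y' \<in> f ` nb V1 E1 v" using ed v \<open>{f v, y'} \<in> E2\<close> by (auto simp: nb_def)
    qed
  qed
  have dgf: "dg V2 E2 (f v) = dg V1 E1 v" if v: "v \<in> V1" for v
    unfolding dg_def nbf[OF v] using inj nb_sub by (metis card_image inj_on_subset)
  have "(\<Sum>y\<in>V2. g y) = (\<Sum>v\<in>V1. g (f v))" for g :: "'b \<Rightarrow> nat"
    using sum.reindex[OF inj, of g] img by simp
  note ri = this
  have "2 * card E2 = 2 * card E1"
    using handshake[OF s1] handshake[OF s2] ri[of "dg V2 E2"] dgf by simp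
  moreover have "Psi T V2 E2 = Psi T V1 E1"
    unfolding Psi_def using ri[of "\<lambda>y. min (dg V2 E2 y) T"] dgf by simp
  ultimately show ?thesis by simp
qed



lemma arith_final:
  fixes n k d B r :: int
  assumes k: "k \<ge> 0" and d: "d \<ge> 0" and r: "r \<ge> 0"
    and n: "n = (4*d+6)*(k+d+5) + r"
    and B: "(2*d+3)*B \<le> d*n"
    and main: "(n-k-2) * (n-k-B) \<le> (n-k-1)*k*(2*d+2) + d*n + k*n"
  shows False
proof -
  have "(4*d+6)*(k+d+5) \<ge> 6*(k+5)" using k d by (simp add: algebra_simps)
  then have N2: "n - k - 2 \<ge> 0" using n k r by smt
  have "(n-k-2) * ((2*d+3)*(n-k) - d*n) \<le> (n-k-2) * ((2*d+3)*(n-k-B))"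
    by (rule mult_left_mono) (use B N2 in \<open>simp_all add: algebra_simps\<close>)
  also have "\<dots> = (2*d+3)*((n-k-2) * (n-k-B))" by (simp add: algebra_simps)
  also have "\<dots> \<le> (2*d+3)*((n-k-1)*k*(2*d+2) + d*n + k*n)"
    by (rule mult_left_mono) (use main d in auto)
  finally have ineq: "(n-k-2) * ((2*d+3)*(n-k) - d*n) - (2*d+3)*((n-k-1)*k*(2*d+2) + d*n + k*n) \<le> 0"
    by simp
  have "(n-k-2) * ((2*d+3)*(n-k) - d*n) - (2*d+3)*((n-k-1)*k*(2*d+2) + d*n + k*n)
    = 2520 + 174*r + 3*r^2 + 5274*d + 211*d*r + d*r^2 + 4094*d^2 + 74*d^2*r + 1468*d^3 + 8*d^3*r
      + 248*d^4 + 16*d^5 + 606*k + 21*k*r + 1136*k*d + 21*k*d*r + 722*k*d^2 + 4*k*d^2*r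
      + 180*k*d^3 + 16*k*d^4 + 27*k^2 + 42*k^2*d + 16*k^2*d^2"
    unfolding n by algebra
  moreover have "2520 + 174*r + 3*r^2 + 5274*d + 211*d*r + d*r^2 + 4094*d^2 + 74*d^2*r + 1468*d^3 + 8*d^3*r
      + 248*d^4 + 16*d^5 + 606*k + 21*k*r + 1136*k*d + 21*k*d*r + 722*k*d^2 + 4*k*d^2*r
      + 180*k*d^3 + 16*k*d^4 + 27*k^2 + 42*k^2*d + 16*k^2*d^2 > 0"
    using k d r by (intro add_pos_nonneg mult_nonneg_nonneg zero_le_power) auto
  ultimately show False using ineq by simp
qed


lemma core:
  fixes VG :: "'a set" and EG :: "'a set set"
    and VH :: "'b set" and EH :: "'b set set"
    and d n k T :: nat and I :: "nat set"
    and u :: "nat \<Rightarrow> 'a" and w :: "nat \<Rightarrow> 'b"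
  assumes sG: "simple_graph VG EG" and sH: "simple_graph VH EH"
    and cG: "card VG = n" and cH: "card VH = n"
    and nb: "(4*d+6)*(k+d+5) \<le> n"
    and mG: "2 * card EG \<le> d * n" and mH: "2 * card EH \<le> d * n"
    and I: "I = {1..n-k}"
    and iu: "inj_on u I" and uI: "u ` I \<subseteq> VG"
    and iw: "inj_on w I" and wI: "w ` I \<subseteq> VH"
    and eqE: "\<forall>i\<in>I. card (del_vertex_edges EG (u i)) = card (del_vertex_edges EH (w i))"
    and eqP: "\<forall>i\<in>I. Psi T (VG - {u i}) (del_vertex_edges EG (u i)) = Psi T (VH - {w i}) (del_vertex_edges EH (w i))"
    and T: "T = 2*d+2"
    and lt: "card EH < card EG"
  shows False
proof -
  have fG: "finite VG" using sG sg_finite by auto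
  have fH: "finite VH" using sH sg_finite by auto
  have kn: "k \<le> n" using nb by (simp add: algebra_simps)
  have cI: "card I = n - k" using I by simp
  have fI: "finite I" using I by simp
  define xG where "xG = dg VG EG"
  define xH where "xH = dg VH EH"
  define lG where "lG = lam T VG EG"
  define lH where "lH = lam T VH EH"
  define Y where "Y = Psi T VG EG"
  define Z where "Z = Psi T VH EH"
  define P where "P = (\<Sum>i\<in>I. min (xG (u i)) T)"
  define Q where "Q = (\<Sum>i\<in>I. min (xH (w i)) T)"
  define LG where "LG = (\<Sum>i\<in>I. lG (u i))"
  define LH where "LH = (\<Sum>i\<in>I. lH (w i))"
  define B where "B = card {i\<in>I. T < xG (u i)}"
  have ri: "(\<Sum>i\<in>I. f (u i)) = (\<Sum>v\<in>u ` I. f v)" for f :: "'a \<Rightarrow> nat"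
    using sum.reindex[OF iu, of f] by simp
  have riH: "(\<Sum>i\<in>I. f (w i)) = (\<Sum>v\<in>w ` I. f v)" for f :: "'b \<Rightarrow> nat"
    using sum.reindex[OF iw, of f] by simp
  have cwI: "card (VH - w ` I) = k"
    using card_image[OF iw] cI cH wI fH kn by (simp add: card_Diff_subset finite_subset)
  have cuI: "card (VG - u ` I) = k"
    using card_image[OF iu] cI cG uI fG kn by (simp add: card_Diff_subset finite_subset)
  have degi: "xG (u i) > xH (w i)" if i: "i \<in> I" for i
  proof -
    have "card (del_vertex_edges EG (u i)) + xG (u i) = card EG"
      using card_del[OF sG] uI i unfolding xG_def by auto
    moreover have "card (del_vertex_edges EH (w i)) + xH (w i) = card EH"
      using card_del[OF sH] wI i unfolding xH_def by auto
    ultimately show ?thesis using eqE i lt by auto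
  qed
  have psii: "Z + min (xG (u i)) T + lG (u i) = Y + min (xH (w i)) T + lH (w i)" if i: "i \<in> I" for i
  proof -
    have "Y = Psi T (VG - {u i}) (del_vertex_edges EG (u i)) + min (xG (u i)) T + lG (u i)"
      using Psi_del[OF sG] uI i unfolding Y_def xG_def lG_def by auto
    moreover have "Z = Psi T (VH - {w i}) (del_vertex_edges EH (w i)) + min (xH (w i)) T + lH (w i)"
      using Psi_del[OF sH] wI i unfolding Z_def xH_def lH_def by auto
    ultimately show ?thesis using eqP i by auto
  qed
  have e1: "(n-k) * Z + P + LG = (n-k) * Y + Q + LH"
  proof -
    have "(\<Sum>i\<in>I. Z + min (xG (u i)) T + lG (u i)) = (\<Sum>i\<in>I. Y + min (xH (w i)) T + lH (w i))"
      using psii by (rule sum.cong[OF refl])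
    then show ?thesis unfolding P_def Q_def LG_def LH_def using cI by (simp add: sum.distrib)
  qed
  have e2: "LG \<le> Y"
  proof -
    have "LG = (\<Sum>v\<in>u ` I. lG v)" unfolding LG_def by (rule ri)
    also have "\<dots> \<le> (\<Sum>v\<in>VG. lG v)" using uI fG by (intro sum_mono2) auto
    also have "\<dots> = (\<Sum>y\<in>VG. if xG y \<le> T then xG y else 0)"
      unfolding lG_def xG_def by (rule lam_sum[OF sG])
    also have "\<dots> \<le> Y" unfolding Y_def Psi_def xG_def by (intro sum_mono) auto
    finally show ?thesis .
  qed
  have e3: "(\<Sum>v\<in>VH. lH v) \<le> LH + k * n"
  proof -
    have "(\<Sum>v\<in>VH. lH v) = (\<Sum>v\<in>w ` I. lH v) + (\<Sum>v\<in>VH - w ` I. lH v)"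
      using wI fH by (simp add: sum.subset_diff[of _ VH] add.commute)
    moreover have "(\<Sum>v\<in>VH - w ` I. lH v) \<le> (\<Sum>v\<in>VH - w ` I. n)"
    proof (intro sum_mono)
      fix v assume "v \<in> VH - w ` I"
      have "lH v \<le> card (nb VH EH v)" unfolding lH_def lam_def
        by (intro card_mono nb_finite[OF sH]) auto
      also have "\<dots> \<le> card VH" by (intro card_mono fH nb_sub)
      finally show "lH v \<le> n" using cH by simp
    qed
    ultimately show ?thesis using cwI riH[of lH] unfolding LH_def by simp
  qed
  have e4: "Z \<le> (\<Sum>v\<in>VH. lH v) + d * n"
  proof -
    have "Z \<le> (\<Sum>y\<in>VH. (if xH y \<le> T then xH y else 0) + xH y)"
      unfolding Z_def Psi_def xH_def by (intro sum_mono) auto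
    also have "\<dots> = (\<Sum>v\<in>VH. lH v) + 2 * card EH"
      using lam_sum[OF sH] handshake[OF sH] unfolding lH_def xH_def by (simp add: sum.distrib)
    finally show ?thesis using mH by simp
  qed
  have e5: "P \<le> Y"
  proof -
    have "P = (\<Sum>v\<in>u ` I. min (xG v) T)" unfolding P_def by (rule ri)
    also have "\<dots> \<le> Y" unfolding Y_def Psi_def xG_def using uI fG by (intro sum_mono2) auto
    finally show ?thesis .
  qed
  have e6: "Z \<le> Q + k * T"
  proof -
    have "Z = (\<Sum>v\<in>w ` I. min (xH v) T) + (\<Sum>v\<in>VH - w ` I. min (xH v) T)"
      unfolding Z_def Psi_def xH_def using wI fH by (simp add: sum.subset_diff[of _ VH] add.commute)
    moreover have "(\<Sum>v\<in>VH - w ` I. min (xH v) T) \<le> (\<Sum>v\<in>VH - w ` I. T)"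
      by (intro sum_mono) auto
    ultimately show ?thesis using cwI riH[of "\<lambda>v. min (xH v) T"] unfolding Q_def by simp
  qed
  have e7: "Q + (n-k) \<le> P + B"
  proof -
    have "(\<Sum>i\<in>I. min (xH (w i)) T + 1) \<le> (\<Sum>i\<in>I. min (xG (u i)) T + (if T < xG (u i) then 1 else 0))"
      using degi by (intro sum_mono) (fastforce simp: min_def)
    moreover have "(\<Sum>i\<in>I. (if T < xG (u i) then 1 else 0)) = B"
      unfolding B_def using fI by (simp add: sum.inter_filter[symmetric])
    moreover have "(\<Sum>i\<in>I. min (xH (w i)) T + 1) = Q + (n - k)"
      unfolding Q_def using cI by (simp only: sum.distrib) simp
    moreover have "(\<Sum>i\<in>I. min (xG (u i)) T + (if T < xG (u i) then 1 else 0)) = P + (\<Sum>i\<in>I. (if T < xG (u i) then 1 else 0))"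
      unfolding P_def by (simp only: sum.distrib)
    ultimately show ?thesis by linarith
  qed
  have e8: "(T+1) * B \<le> d * n"
  proof -
    have "(\<Sum>i\<in>I. (if T < xG (u i) then T+1 else 0)) \<le> (\<Sum>i\<in>I. xG (u i))"
      by (intro sum_mono) auto
    moreover have "(\<Sum>i\<in>I. (if T < xG (u i) then T+1 else 0)) = (T+1) * B"
      unfolding B_def using fI by (simp add: sum.inter_filter[symmetric])
    moreover have "(\<Sum>i\<in>I. xG (u i)) \<le> (\<Sum>v\<in>VG. xG v)"
      using ri[of xG] uI fG by (simp add: sum_mono2)
    moreover have "(\<Sum>v\<in>VG. xG v) = 2 * card EG" unfolding xG_def by (rule handshake[OF sG])
    ultimately show ?thesis using mG by linarith
  qed
  define N where "N = int n - int k"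
  have N1: "N \<ge> 1" using nb unfolding N_def by (simp add: algebra_simps)
  have Nn: "int (n - k) = N" using kn unfolding N_def by simp
  have i1: "N * int Z + int P + int LG = N * int Y + int Q + int LH"
    using arg_cong[OF e1, of int] Nn by simp
  have i2: "int LG \<le> int Y" using e2 by simp
  have i34: "int Z \<le> int LH + int k * int n + int d * int n"
  proof -
    have "Z \<le> LH + k * n + d * n" using e3 e4 by linarith
    then have "int Z \<le> int (LH + k * n + d * n)" by (simp only: of_nat_le_iff)
    then show ?thesis by simp
  qed
  have i5: "int P \<le> int Y" using e5 by simp
  have i6: "int Z \<le> int Q + int k * int T"
  proof -
    have "int Z \<le> int (Q + k * T)" using e6 by (simp only: of_nat_le_iff)
    then show ?thesis by simp
  qed
  have i7: "int Q + N \<le> int P + int B"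
  proof -
    have "int (Q + (n - k)) \<le> int (P + B)" using e7 by (simp only: of_nat_le_iff)
    then show ?thesis using Nn by simp
  qed
  have i8: "(2*int d+3) * int B \<le> int d * int n"
  proof -
    have "(2*d+3) * B \<le> d * n" using e8 T by (simp add: algebra_simps)
    then have "int ((2*d+3) * B) \<le> int (d * n)" by (simp only: of_nat_le_iff)
    then show ?thesis by simp
  qed
  define W where "W = int P - int Q"
  define D where "D = int Y - int Z"
  have h1: "(N - 1) * D \<le> W + int d * int n + int k * int n"
  proof -
    have "N * D = W + int LG - int LH" using i1 unfolding W_def D_def by (simp add: algebra_simps)
    then have "N * D \<le> W + D + int d * int n + int k * int n" using i2 i34 unfolding D_def by linarith
    then show ?thesis by (simp add: algebra_simps)
  qed
  have h2: "(N - 1) * (W - int k * int T) \<le> (N - 1) * D"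
    by (rule mult_left_mono) (use i5 i6 N1 in \<open>auto simp: W_def D_def\<close>)
  have h3: "(N - 2) * W \<le> (N - 1) * int k * int T + int d * int n + int k * int n"
    using h1 h2 by (simp add: algebra_simps)
  have N2: "N \<ge> 2" using nb unfolding N_def by (simp add: algebra_simps)
  have h4: "(N - 2) * (N - int B) \<le> (N - 2) * W"
    by (rule mult_left_mono) (use i7 N2 in \<open>auto simp: W_def\<close>)
  define r where "r = int n - (4*int d+6)*(int k+int d+5)"
  have r0: "r \<ge> 0"
  proof -
    have "int ((4*d+6)*(k+d+5)) \<le> int n" using nb by (simp only: of_nat_le_iff)
    then show ?thesis unfolding r_def by simp
  qed
  show False
  proof (rule arith_final[of "int k" "int d" r "int n" "int B"])
    show "int n = (4 * int d + 6) * (int k + int d + 5) + r" unfolding r_def by simp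
    show "(2 * int d + 3) * int B \<le> int d * int n" by (rule i8)
    show "(int n - int k - 2) * (int n - int k - int B) \<le> (int n - int k - 1) * int k * (2 * int d + 2) + int d * int n + int k * int n"
    proof -
      have iT: "int T = 2 * int d + 2" using T by simp
      show ?thesis using order_trans[OF h4 h3] unfolding N_def iT .
    qed
  qed (use r0 in auto)
qed


theorem theorem1p3:
  fixes VG :: "'a set" and EG :: "'a set set"
    and VH :: "'b set" and EH :: "'b set set"
    and d n k :: nat
    and u :: "nat \<Rightarrow> 'a" and w :: "nat \<Rightarrow> 'b"
  assumes "simple_graph VG EG" and "simple_graph VH EH"
    and "card VG = n" and "card VH = n" and "n \<ge> 3"
    and "real k \<le> real n / (4 * real d + 6) - real d - 5"
    and "avg_degree VG EG \<le> real d" and "avg_degree VH EH \<le> real d"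
    and "inj_on u {1..n - k}" and "u ` {1..n - k} \<subseteq> VG"
    and "inj_on w {1..n - k}" and "w ` {1..n - k} \<subseteq> VH"
    and "\<forall>i\<in>{1..n - k}. graph_iso (VG - {u i}) (del_vertex_edges EG (u i))
                                   (VH - {w i}) (del_vertex_edges EH (w i))"
  shows "card EG = card EH"
proof -
  note sG = assms(1) and sH = assms(2)
  have npos: "real n > 0" using assms(5) by simp
  have "real k + real d + 5 \<le> real n / (4 * real d + 6)" using assms(6) by simp
  then have "(real k + real d + 5) * (4 * real d + 6) \<le> real n"
    by (simp add: le_divide_eq add_pos_nonneg)
  then have "real ((4*d+6)*(k+d+5)) \<le> real n" by (simp add: algebra_simps)
  then have nb: "(4*d+6)*(k+d+5) \<le> n" by (simp only: of_nat_le_iff)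
  have md: "2 * card E \<le> d * n" if "avg_degree V E \<le> real d" "card V = n" for V :: "'c set" and E
  proof -
    have "2 * real (card E) / real n \<le> real d" using that unfolding avg_degree_def by simp
    then have "2 * real (card E) \<le> real d * real n" using npos by (simp add: divide_le_eq)
    then have "real (2 * card E) \<le> real (d * n)" by simp
    then show ?thesis by (simp only: of_nat_le_iff)
  qed
  have mG: "2 * card EG \<le> d * n" using md assms(7,3) by blast
  have mH: "2 * card EH \<le> d * n" using md assms(8,4) by blast
  define T where "T = 2*d+2"
  have both: "card (del_vertex_edges EG (u i)) = card (del_vertex_edges EH (w i))
     \<and> Psi T (VG - {u i}) (del_vertex_edges EG (u i)) = Psi T (VH - {w i}) (del_vertex_edges EH (w i))"
    if i: "i \<in> {1..n-k}" for i
    using iso_inv[OF sg_del[OF sG] sg_del[OF sH]] assms(13) i by blast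
  show ?thesis
  proof (rule linorder_cases[of "card EG" "card EH"])
    assume lt: "card EG < card EH"
    show ?thesis
      by (rule FalseE, rule core[OF sH sG assms(4,3) nb mH mG refl assms(11,12,9,10) _ _ T_def lt])
        (use both in auto)
  next
    assume lt: "card EH < card EG"
    show ?thesis
      by (rule FalseE, rule core[OF sG sH assms(3,4) nb mG mH refl assms(9,10,11,12) _ _ T_def lt])
        (use both in auto)
  qed
qed
end
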